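(* Let $K$ be an $n\times d$ real matrix with rows $K_1,\dots,K_n$, let $0<\delta_2\le\delta_1\le1/4$, and let $S\subseteq[n]$ satisfy (i) for all $j,\ell\in S$ with $j\ne\ell$: $|K_jK_\ell^T|\le\delta_1\min(\|K_j\|_2^2,\|K_\ell\|_2^2)$; (ii) for all $j\in S$, $\ell\notin S$: $|K_\ell K_j^T|\le\delta_2\min(\|K_j\|_2^2,\|K_\ell\|_2^2)$. Assume $K_i\neq0$ for all $i\in S$. Let $\rho=\frac{1}{1+\delta_1^2|S|+\delta_2^2n}$ and $U=\{i\in[n]:\tau_i(K)\ge\rho\}$. Then $S\subseteq U$ and $|U|\le d\,(1+\delta_1^2|S|+\delta_2^2n)$.
   Context: The leverage score of row $i$ of $K$ is $\tau_i(K)=\sup_{y\in\mathbb{R}^d:\,Ky\ne0}\frac{\langle K_i,y\rangle^2}{\sum_{j=1}^n\langle K_j,y\rangle^2}$, equivalently $K_i(K^TK)^{+}K_i^T$ with $^{+}$ the Moore–Penrose pseudoinverse. $[n]=\{1,\dots,n\}$. *)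

theory Defs
  imports "HOL-Analysis.Analysis"
begin

text \<open>A real n x d matrix K is modelled as K :: real^'d^'n; its rows are K $ i.
  The row index set [n] is UNIV :: 'n set, n = CARD('n), d = CARD('d).\<close>

text \<open>Leverage score of row i, as the supremum in the paper. Convention: if K = 0
  the supremum is over the empty set; we set it to 0 (agreeing with the
  pseudoinverse formula K_i (K^T K)^+ K_i^T = 0).\<close>
definition leverage :: "real^'d^'n \<Rightarrow> 'n \<Rightarrow> real" where
  "leverage K i =
     (if K = 0 then 0
      else Sup {(K $ i \<bullet> y)\<^sup>2 / (\<Sum>j\<in>UNIV. (K $ j \<bullet> y)\<^sup>2) | y. K *v y \<noteq> 0})"

end

theory Submission imports Defs begin

lemma key:
  fixes V :: "(real^'n) set" assumes "subspace V"
  obtains c where "\<And>v i. v \<in> V \<Longrightarrow> (v$i)\<^sup>2 \<le> (norm v)\<^sup>2 * c i"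
    "\<And>i. c i \<ge> 0" "(\<Sum>i\<in>UNIV. c i) \<le> real (dim V)"
proof -
  obtain B where B: "B \<subseteq> V" "pairwise orthogonal B" "\<And>x. x \<in> B \<Longrightarrow> norm x = 1"
     "independent B" "card B = dim V" "span B = V"
    using orthonormal_basis_subspace[OF assms] by metis
  have fin: "finite B" using B(4) independent_imp_finite by blast
  define c where "c i = (\<Sum>b\<in>B. (b$i)\<^sup>2)" for i
  show ?thesis
  proof
    fix i show "c i \<ge> 0" unfolding c_def by (simp add: sum_nonneg)
  next
    fix v i assume "v \<in> V"
    then have "v \<in> span B" using B(6) by simp
    then obtain u where u: "v = (\<Sum>b\<in>B. u b *\<^sub>R b)" using span_finite[OF fin] by auto
    have vi: "v$i = (\<Sum>b\<in>B. u b * b$i)" unfolding u by (simp add: sum_component)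
    have inner1: "(\<Sum>b'\<in>B. u b * u b' * (b \<bullet> b')) = u b * u b" if "b \<in> B" for b
    proof -
      have "(\<Sum>b'\<in>B. u b * u b' * (b \<bullet> b')) = (\<Sum>b'\<in>B. if b' = b then u b * u b else 0)"
      proof (rule sum.cong)
        fix b' assume "b' \<in> B"
        show "u b * u b' * (b \<bullet> b') = (if b' = b then u b * u b else 0)"
        proof (cases "b' = b")
          case True
          then have "b \<bullet> b = 1" using B(3)[OF that] by (simp add: norm_eq_1)
          then show ?thesis using True by simp
        next
          case False
          then have "b \<bullet> b' = 0" using B(2) that \<open>b' \<in> B\<close> unfolding pairwise_def orthogonal_def by (metis inner_commute)
          then show ?thesis using False by simp
        qed
      qed simp
      also have "\<dots> = u b * u b" using that fin by simp
      finally show ?thesis .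
    qed
    have nv: "(norm v)\<^sup>2 = (\<Sum>b\<in>B. (u b)\<^sup>2)"
    proof -
      have "(norm v)\<^sup>2 = v \<bullet> v" by (simp add: power2_norm_eq_inner)
      also have "\<dots> = (\<Sum>b\<in>B. \<Sum>b'\<in>B. u b * u b' * (b \<bullet> b'))"
        unfolding u by (simp add: inner_sum_left inner_sum_right sum_distrib_left mult.assoc inner_commute mult.left_commute)
      also have "\<dots> = (\<Sum>b\<in>B. (u b)\<^sup>2)"
        by (rule sum.cong) (auto simp: inner1 power2_eq_square)
      finally show ?thesis .
    qed
    show "(v$i)\<^sup>2 \<le> (norm v)\<^sup>2 * c i"
      unfolding vi nv c_def by (rule Cauchy_Schwarz_ineq_sum)
  next
    have "(\<Sum>i\<in>UNIV. c i) = (\<Sum>b\<in>B. \<Sum>i\<in>UNIV. (b$i)\<^sup>2)"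
      unfolding c_def by (rule sum.swap)
    also have "\<dots> = (\<Sum>b\<in>B. 1)"
    proof (rule sum.cong)
      fix b assume "b \<in> B"
      have "(\<Sum>i\<in>UNIV. (b$i)\<^sup>2) = b \<bullet> b" by (simp add: inner_vec_def power2_eq_square)
      also have "\<dots> = 1" using B(3)[OF \<open>b \<in> B\<close>] by (simp add: norm_eq_1)
      finally show "(\<Sum>i\<in>UNIV. (b$i)\<^sup>2) = 1" .
    qed simp
    also have "\<dots> = real (dim V)" using B(5) by simp
    finally show "(\<Sum>i\<in>UNIV. c i) \<le> real (dim V)" by simp
  qed
qed

lemma sq_le: "\<bar>x\<bar> \<le> t \<Longrightarrow> (x::real)\<^sup>2 \<le> t\<^sup>2"
  by (metis abs_ge_zero power2_abs power_mono)

lemma nsq: "(norm (v::real^'n))\<^sup>2 = (\<Sum>j\<in>UNIV. (v $ j)\<^sup>2)"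
  unfolding power2_norm_eq_inner by (simp add: inner_vec_def power2_eq_square)

lemma lev_set:
  fixes K :: "real^'d^'n"
  shows "{(K $ i \<bullet> y)\<^sup>2 / (\<Sum>j\<in>UNIV. (K $ j \<bullet> y)\<^sup>2) | y. K *v y \<noteq> 0}
       = {((K *v y) $ i)\<^sup>2 / (norm (K *v y))\<^sup>2 | y. K *v y \<noteq> 0}"
proof -
  have "\<And>y. (\<Sum>j\<in>UNIV. (K $ j \<bullet> y)\<^sup>2) = (norm (K *v y))\<^sup>2"
    by (simp add: nsq matrix_mult_dot)
  moreover have "\<And>y. K $ i \<bullet> y = (K *v y) $ i" by (simp add: matrix_mult_dot)
  ultimately show ?thesis by simp
qed

lemma lev_upper:
  fixes K :: "real^'d^'n"
  assumes "K \<noteq> 0" "\<And>y. ((K *v y) $ i)\<^sup>2 \<le> (norm (K *v y))\<^sup>2 * c"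
  shows "leverage K i \<le> c"
proof -
  obtain a b where "K $ a $ b \<noteq> 0" using assms(1)
    by (metis vec_eq_iff zero_index)
  then have "K *v axis b 1 \<noteq> 0"
    by (metis matrix_vector_mult_basis column_def vec_lambda_beta zero_index)
  then have ne: "{((K *v y) $ i)\<^sup>2 / (norm (K *v y))\<^sup>2 | y. K *v y \<noteq> 0} \<noteq> {}" by blast
  have "Sup {((K *v y) $ i)\<^sup>2 / (norm (K *v y))\<^sup>2 | y. K *v y \<noteq> 0} \<le> c"
  proof (rule cSup_least[OF ne])
    fix x assume "x \<in> {((K *v y) $ i)\<^sup>2 / (norm (K *v y))\<^sup>2 | y. K *v y \<noteq> 0}"
    then obtain y where y: "K *v y \<noteq> 0" "x = ((K *v y) $ i)\<^sup>2 / (norm (K *v y))\<^sup>2" by blast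
    have "(norm (K *v y))\<^sup>2 > 0" using y(1) by simp
    then show "x \<le> c" using y(2) assms(2)[of y] by (simp add: divide_le_eq mult.commute)
  qed
  then show ?thesis using assms(1) unfolding leverage_def lev_set by simp
qed

lemma lev_lower:
  fixes K :: "real^'d^'n"
  assumes "K *v y \<noteq> 0"
  shows "((K *v y) $ i)\<^sup>2 / (norm (K *v y))\<^sup>2 \<le> leverage K i"
proof -
  have K: "K \<noteq> 0" using assms by auto
  have "bdd_above {((K *v y) $ i)\<^sup>2 / (norm (K *v y))\<^sup>2 | y. K *v y \<noteq> 0}"
  proof (rule bdd_aboveI)
    fix x assume "x \<in> {((K *v y) $ i)\<^sup>2 / (norm (K *v y))\<^sup>2 | y. K *v y \<noteq> 0}"
    then obtain y where y: "K *v y \<noteq> 0" "x = ((K *v y) $ i)\<^sup>2 / (norm (K *v y))\<^sup>2" by blast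
    have "\<bar>(K *v y) $ i\<bar> \<le> norm (K *v y)" by (rule component_le_norm_cart)
    then have "((K *v y) $ i)\<^sup>2 \<le> (norm (K *v y))\<^sup>2" by (rule sq_le)
    moreover have "(norm (K *v y))\<^sup>2 > 0" using y(1) by simp
    ultimately show "x \<le> 1" using y(2) by simp
  qed
  then show ?thesis using K assms unfolding leverage_def lev_set
    by (auto intro!: cSup_upper)
qed

theorem mainTheorem7:
  fixes K :: "real^'d^'n" and \<delta>1 \<delta>2 :: real and S :: "'n set"
  assumes "0 < \<delta>2" and "\<delta>2 \<le> \<delta>1" and "\<delta>1 \<le> 1/4"
    and "\<forall>j\<in>S. \<forall>l\<in>S. j \<noteq> l \<longrightarrow>
           \<bar>K $ j \<bullet> K $ l\<bar> \<le> \<delta>1 * min ((norm (K $ j))\<^sup>2) ((norm (K $ l))\<^sup>2)"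
    and "\<forall>j\<in>S. \<forall>l. l \<notin> S \<longrightarrow>
           \<bar>K $ l \<bullet> K $ j\<bar> \<le> \<delta>2 * min ((norm (K $ j))\<^sup>2) ((norm (K $ l))\<^sup>2)"
    and "\<forall>i\<in>S. K $ i \<noteq> 0"
  shows "S \<subseteq> {i. leverage K i \<ge> 1 / (1 + \<delta>1\<^sup>2 * real (card S) + \<delta>2\<^sup>2 * real CARD('n))}
       \<and> real (card {i. leverage K i \<ge> 1 / (1 + \<delta>1\<^sup>2 * real (card S) + \<delta>2\<^sup>2 * real CARD('n))})
           \<le> real CARD('d) * (1 + \<delta>1\<^sup>2 * real (card S) + \<delta>2\<^sup>2 * real CARD('n))"
proof -
  define D where "D = 1 + \<delta>1\<^sup>2 * real (card S) + \<delta>2\<^sup>2 * real CARD('n)"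
  have D1: "D \<ge> 1" unfolding D_def by (simp add: add_nonneg_nonneg)
  have d1: "\<delta>1 \<ge> 0" using assms(1,2) by simp
  define U where "U = {i. leverage K i \<ge> 1 / D}"
  have part1: "S \<subseteq> U"
  proof
    fix i assume iS: "i \<in> S"
    define a where "a = (norm (K $ i))\<^sup>2"
    have a0: "a > 0" using assms(6) iS unfolding a_def by simp
    have Kii: "K $ i \<bullet> K $ i = a" unfolding a_def by (simp add: power2_norm_eq_inner)
    define g where "g j = (if j = i then a\<^sup>2 else 0) + (if j \<in> S then \<delta>1\<^sup>2 * a\<^sup>2 else 0) + \<delta>2\<^sup>2 * a\<^sup>2" for j
    have q0: "0 \<le> \<delta>2\<^sup>2 * a\<^sup>2" by simp
    have pt: "(K $ j \<bullet> K $ i)\<^sup>2 \<le> g j" for j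
    proof (cases "j = i")
      case True
      then show ?thesis unfolding g_def using Kii by (simp add: add_nonneg_nonneg)
    next
      case False
      show ?thesis
      proof (cases "j \<in> S")
        case True
        have "\<bar>K $ j \<bullet> K $ i\<bar> \<le> \<delta>1 * min ((norm (K $ j))\<^sup>2) ((norm (K $ i))\<^sup>2)"
          using assms(4) True iS False by blast
        also have "\<dots> \<le> \<delta>1 * a" unfolding a_def using d1 by (intro mult_left_mono) auto
        finally have "(K $ j \<bullet> K $ i)\<^sup>2 \<le> (\<delta>1 * a)\<^sup>2"
          by (rule sq_le)
        then show ?thesis unfolding g_def using False True q0 by (simp add: power_mult_distrib add_increasing2)
      next
        case F2: False
        have "\<bar>K $ j \<bullet> K $ i\<bar> \<le> \<delta>2 * min ((norm (K $ i))\<^sup>2) ((norm (K $ j))\<^sup>2)"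
          using assms(5) F2 iS by blast
        also have "\<dots> \<le> \<delta>2 * a" unfolding a_def using assms(1) by (intro mult_left_mono) auto
        finally have "(K $ j \<bullet> K $ i)\<^sup>2 \<le> (\<delta>2 * a)\<^sup>2"
          by (rule sq_le)
        then show ?thesis unfolding g_def using False F2 by (simp add: power_mult_distrib)
      qed
    qed
    have sg: "(\<Sum>j\<in>UNIV. g j) = a\<^sup>2 * D"
      unfolding g_def D_def by (simp add: sum.distrib sum.If_cases algebra_simps)
    have Ky: "(K *v K $ i) $ i = a" using Kii by (simp add: matrix_mult_dot)
    then have Kyn: "K *v K $ i \<noteq> 0" using a0 by auto
    have nsum: "(norm (K *v K $ i))\<^sup>2 = (\<Sum>j\<in>UNIV. (K $ j \<bullet> K $ i)\<^sup>2)"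
      by (simp add: nsq matrix_mult_dot)
    have "(norm (K *v K $ i))\<^sup>2 \<le> a\<^sup>2 * D" unfolding nsum sg[symmetric]
      by (rule sum_mono) (rule pt)
    moreover have "(norm (K *v K $ i))\<^sup>2 > 0" using Kyn by simp
    ultimately have "1 / D \<le> a\<^sup>2 / (norm (K *v K $ i))\<^sup>2"
      using a0 D1 by (simp add: field_simps)
    also have "\<dots> \<le> leverage K i" using lev_lower[OF Kyn, of i] Ky by simp
    finally show "i \<in> U" unfolding U_def by simp
  qed
  have part2: "real (card U) \<le> real CARD('d) * D"
  proof (cases "K = 0")
    case True
    then have "U = {}" unfolding U_def leverage_def using D1 by auto
    then show ?thesis using D1 by simp
  next
    case False
    have sub: "subspace (range (\<lambda>y. K *v y))"
      by (rule real_vector.linear_subspace_image) auto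
    obtain c where c: "\<And>v i. v \<in> range (\<lambda>y. K *v y) \<Longrightarrow> (v$i)\<^sup>2 \<le> (norm v)\<^sup>2 * c i"
      "\<And>i. c i \<ge> 0" "(\<Sum>i\<in>UNIV. c i) \<le> real (dim (range (\<lambda>y. K *v y)))"
      using key[OF sub] by blast
    have lc: "leverage K i \<le> c i" for i
      by (rule lev_upper[OF False]) (rule c(1), simp)
    have dimd: "real (dim (range (\<lambda>y. K *v y))) \<le> real CARD('d)"
      using rank_bound[of K] rank_dim_range[of K] by simp
    have "real (card U) * (1 / D) = (\<Sum>i\<in>U. 1 / D)" by simp
    also have "\<dots> \<le> (\<Sum>i\<in>U. c i)"
      by (rule sum_mono) (metis (mono_tags, lifting) lc U_def mem_Collect_eq order_trans)
    also have "\<dots> \<le> (\<Sum>i\<in>UNIV. c i)" by (rule sum_mono2) (auto simp: c(2))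
    also have "\<dots> \<le> real CARD('d)" using c(3) dimd by linarith
    finally show ?thesis using D1 by (simp add: field_simps)
  qed
  show ?thesis using part1 part2 unfolding U_def D_def by simp
qed

end
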